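(* Let $f_{\operatorname{base}}$ be a baseline model. Suppose that the function class $\mathcal{F}$ is convex with $\tau^{(s)}\in\mathcal{F}$ for all $s\in\{1,\ldots,S\}$, and that $\mathcal{H}$ is a convex subset of $\Delta_{S-1}$. Let \[ f^*_{\operatorname{rel}}(\cdot;f_{\operatorname{base}})=\underset{f\in\mathcal{F}}{\arg\min}\ \max_{Q\in\mathcal{C}(Q_{\boldsymbol{X}},\mathcal{H})}\ \mathbb{E}_Q\Big[(Y(1)-Y(0)-f(\boldsymbol{X}))^2-(Y(1)-Y(0)-f_{\operatorname{base}}(\boldsymbol{X}))^2\Big]. \] Then \[ f^*_{\operatorname{rel}}(\cdot;f_{\operatorname{base}})=\sum_{s=1}^S q_s^*\,\tau^{(s)}(\cdot)\quad\text{with}\quad \boldsymbol{q}^*=\underset{\boldsymbol{q}\in\mathcal{H}}{\arg\min}\ \mathbb{E}_{Q_{\boldsymbol{X}}}\Big[\sum_{s=1}^S q_s\tau^{(s)}(\boldsymbol{X})-f_{\operatorname{base}}(\boldsymbol{X})\Big]^2. \]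
   Context: Setting: there are $S$ source sites; site $s$ has a joint distribution $P^{(s)}$ of potential outcomes $(Y(1),Y(0))$ (real-valued) and covariates $\boldsymbol{X}\in\mathcal{X}$, with site-specific conditional average treatment effect (CATE) $\tau^{(s)}(\boldsymbol{x})=\mathbb{E}_{P^{(s)}}[Y(1)-Y(0)\mid \boldsymbol{X}=\boldsymbol{x}]$. $Q_{\boldsymbol{X}}$ is a target covariate distribution on $\mathcal{X}$. For a joint distribution $Q$ of $(Y(1),Y(0),\boldsymbol{X})$, $\tau_Q(\boldsymbol{x})=\mathbb{E}_Q[Y(1)-Y(0)\mid\boldsymbol{X}=\boldsymbol{x}]$. $\Delta_{S-1}=\{\boldsymbol{q}\in\mathbb{R}^S:\sum_s q_s=1,\ \min_s q_s\ge 0\}$. For $\mathcal{H}\subseteq\Delta_{S-1}$, the uncertainty set is $\mathcal{C}(Q_{\boldsymbol{X}},\mathcal{H})=\{Q=(Q_{\boldsymbol{X}},Q_{(Y(1),Y(0))\mid\boldsymbol{X}}):\ \tau_Q(\cdot)=\sum_{s=1}^S q_s\tau^{(s)}(\cdot)\text{ for some }\boldsymbol{q}\in\mathcal{H}\}$. *)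

theory Defs
  imports "HOL-Probability.Probability"
begin

text \<open>Sites are indexed by a finite type 's (S = CARD('s)); weight vectors are real^'s.\<close>

definition prob_simplex :: "(real^'s::finite) set" where
  "prob_simplex = {q. sum (\<lambda>s. q $ s) UNIV = 1 \<and> (\<forall>s. q $ s \<ge> 0)}"

definition tau_mix :: "('s::finite \<Rightarrow> 'x \<Rightarrow> real) \<Rightarrow> real^'s \<Rightarrow> 'x \<Rightarrow> real" where
  "tau_mix tau q x = (\<Sum>s\<in>UNIV. q $ s * tau s x)"

definition fun_convex :: "('x \<Rightarrow> real) set \<Rightarrow> bool" where
  "fun_convex F \<longleftrightarrow> (\<forall>f\<in>F. \<forall>g\<in>F. \<forall>t::real. 0 \<le> t \<and> t \<le> 1 \<longrightarrow>
      (\<lambda>x. t * f x + (1 - t) * g x) \<in> F)"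

text \<open>A joint distribution Q = (Q_X, Q_{(Y(1),Y(0))|X}) with fixed covariate marginal Q_X is
 represented by the conditional law K of (Y(1),Y(0)) given X (a Markov kernel).
 tau_Q(x) = E_{K x}[Y(1) - Y(0)].\<close>
definition unc_set :: "'x measure \<Rightarrow> ('s::finite \<Rightarrow> 'x \<Rightarrow> real) \<Rightarrow> (real^'s) set
    \<Rightarrow> ('x \<Rightarrow> (real \<times> real) measure) set" where
  "unc_set QX tau H = {K. K \<in> measurable QX (subprob_algebra borel)
      \<and> (\<forall>x\<in>space QX. prob_space (K x))
      \<and> (AE x in QX. integrable (K x) (\<lambda>y. fst y - snd y))
      \<and> (\<exists>q\<in>H. AE x in QX. (\<integral>y. (fst y - snd y) \<partial>K x) = tau_mix tau q x)}"

definition expect_joint :: "'x measure \<Rightarrow> ('x \<Rightarrow> (real \<times> real) measure)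
    \<Rightarrow> ('x \<Rightarrow> real \<times> real \<Rightarrow> real) \<Rightarrow> real" where
  "expect_joint QX K g = (\<integral>x. (\<integral>y. g x y \<partial>K x) \<partial>QX)"

definition robust_rel_risk :: "'x measure \<Rightarrow> ('s::finite \<Rightarrow> 'x \<Rightarrow> real) \<Rightarrow> (real^'s) set
    \<Rightarrow> ('x \<Rightarrow> real) \<Rightarrow> ('x \<Rightarrow> real) \<Rightarrow> real" where
  "robust_rel_risk QX tau H fb f =
     (SUP K\<in>unc_set QX tau H. expect_joint QX K
        (\<lambda>x y. (fst y - snd y - f x)\<^sup>2 - (fst y - snd y - fb x)\<^sup>2))"

end

theory Submission
  imports Defs
begin
lemma integral_kernel_measurable:
  fixes h :: "'a \<Rightarrow> 'b \<Rightarrow> real"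
  assumes h[measurable]: "(\<lambda>(x,y). h x y) \<in> borel_measurable (M \<Otimes>\<^sub>M N)"
    and L[measurable]: "L \<in> measurable M (subprob_algebra N)"
  shows "(\<lambda>x. \<integral>y. h x y \<partial>L x) \<in> borel_measurable M"
proof -
  have eq: "(\<integral>y. h x y \<partial>L x) = (if (\<integral>\<^sup>+y. ennreal (norm (h x y)) \<partial>L x) < \<infinity>
       then enn2real (\<integral>\<^sup>+y. ennreal (h x y) \<partial>L x) - enn2real (\<integral>\<^sup>+y. ennreal (- h x y) \<partial>L x) else 0)"
    if x: "x \<in> space M" for x
  proof -
    have hm: "h x \<in> borel_measurable (L x)"
      using measurable_Pair2[OF h x] subprob_measurableD(3)[OF L x] by auto
    show ?thesis
    proof (cases "integrable (L x) (h x)")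
      case True
      then show ?thesis using real_lebesgue_integral_def[OF True] hm
        by (simp add: integrable_iff_bounded)
    next
      case False
      then show ?thesis using hm not_integrable_integral_eq[OF False]
        by (simp add: integrable_iff_bounded)
    qed
  qed
  have m1: "(\<lambda>x. \<integral>\<^sup>+y. ennreal (norm (h x y)) \<partial>L x) \<in> borel_measurable M"
    by (rule nn_integral_measurable_subprob_algebra2[OF _ L]) measurable
  have m2: "(\<lambda>x. \<integral>\<^sup>+y. ennreal (h x y) \<partial>L x) \<in> borel_measurable M"
    by (rule nn_integral_measurable_subprob_algebra2[OF _ L]) measurable
  have m3: "(\<lambda>x. \<integral>\<^sup>+y. ennreal (- h x y) \<partial>L x) \<in> borel_measurable M"
    by (rule nn_integral_measurable_subprob_algebra2[OF _ L]) measurable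
  have "(\<lambda>x. if (\<integral>\<^sup>+y. ennreal (norm (h x y)) \<partial>L x) < \<infinity>
       then enn2real (\<integral>\<^sup>+y. ennreal (h x y) \<partial>L x) - enn2real (\<integral>\<^sup>+y. ennreal (- h x y) \<partial>L x) else 0)
      \<in> borel_measurable M"
    using m1 m2 m3 by measurable
  then show ?thesis
    by (rule measurable_cong[THEN iffD1, rotated]) (simp add: eq)
qed
definition L2 :: "'a measure \<Rightarrow> ('a \<Rightarrow> real) \<Rightarrow> bool" where
  "L2 M h \<longleftrightarrow> h \<in> borel_measurable M \<and> integrable M (\<lambda>x. (h x)\<^sup>2)"

lemma L2_add:
  assumes "L2 M f" "L2 M g" shows "L2 M (\<lambda>x. f x + g x)"
proof -
  have i: "integrable M (\<lambda>x. 2 * (f x)\<^sup>2 + 2 * (g x)\<^sup>2)"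
    using assms unfolding L2_def by auto
  have "integrable M (\<lambda>x. (f x + g x)\<^sup>2)"
  proof (rule Bochner_Integration.integrable_bound[OF i])
    show "(\<lambda>x. (f x + g x)\<^sup>2) \<in> borel_measurable M" using assms unfolding L2_def by auto
    show "AE x in M. norm ((f x + g x)\<^sup>2) \<le> norm (2 * (f x)\<^sup>2 + 2 * (g x)\<^sup>2)"
    proof (rule AE_I2)
      fix x
      have "0 \<le> (f x - g x)\<^sup>2" by simp
      then have "(f x + g x)\<^sup>2 \<le> 2 * (f x)\<^sup>2 + 2 * (g x)\<^sup>2"
        by (simp add: power2_eq_square algebra_simps)
      then show "norm ((f x + g x)\<^sup>2) \<le> norm (2 * (f x)\<^sup>2 + 2 * (g x)\<^sup>2)"
        by simp
    qed
  qed
  then show ?thesis using assms unfolding L2_def by auto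
qed

lemma L2_cmult:
  assumes "L2 M f" shows "L2 M (\<lambda>x. c * f x)"
  using assms unfolding L2_def by (auto simp: power_mult_distrib)

lemma L2_diff:
  assumes "L2 M f" "L2 M g" shows "L2 M (\<lambda>x. f x - g x)"
  using L2_add[OF assms(1) L2_cmult[OF assms(2), of "-1"]] by simp

lemma L2_abs:
  assumes "L2 M f" shows "L2 M (\<lambda>x. \<bar>f x\<bar>)"
  using assms unfolding L2_def by auto

lemma L2_zero: "L2 M (\<lambda>x. 0)"
  unfolding L2_def by auto

lemma L2_sum:
  assumes "finite A" "\<And>i. i \<in> A \<Longrightarrow> L2 M (u i)"
  shows "L2 M (\<lambda>x. \<Sum>i\<in>A. c i * u i x)"
  using assms
proof (induction A rule: finite_induct)
  case empty then show ?case by (simp add: L2_zero)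
next
  case (insert a A)
  have "L2 M (\<lambda>x. c a * u a x + (\<Sum>i\<in>A. c i * u i x))"
    by (rule L2_add[OF L2_cmult]) (use insert in auto)
  then show ?case using insert by simp
qed

lemma L2_mult:
  assumes "L2 M f" "L2 M g" shows "integrable M (\<lambda>x. f x * g x)"
proof -
  have i: "integrable M (\<lambda>x. (f x)\<^sup>2 + (g x)\<^sup>2)"
    using assms unfolding L2_def by auto
  show ?thesis
  proof (rule Bochner_Integration.integrable_bound[OF i])
    show "(\<lambda>x. f x * g x) \<in> borel_measurable M" using assms unfolding L2_def by auto
    show "AE x in M. norm (f x * g x) \<le> norm ((f x)\<^sup>2 + (g x)\<^sup>2)"
    proof (rule AE_I2)
      fix x
      have "0 \<le> (\<bar>f x\<bar> - \<bar>g x\<bar>)\<^sup>2" by simp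
      then have "2 * (\<bar>f x\<bar> * \<bar>g x\<bar>) \<le> (f x)\<^sup>2 + (g x)\<^sup>2"
        by (simp add: power2_eq_square algebra_simps)
      moreover have "0 \<le> \<bar>f x\<bar> * \<bar>g x\<bar>" by simp
      ultimately have "\<bar>f x\<bar> * \<bar>g x\<bar> \<le> (f x)\<^sup>2 + (g x)\<^sup>2" by linarith
      then show "norm (f x * g x) \<le> norm ((f x)\<^sup>2 + (g x)\<^sup>2)"
        by (simp add: abs_mult)
    qed
  qed
qed

lemma L2_sq_int: "L2 M f \<Longrightarrow> integrable M (\<lambda>x. (f x)\<^sup>2)"
  unfolding L2_def by auto

lemma L2_expand:
  assumes a: "L2 M a" and d: "L2 M d"
  shows "(\<integral>x. (a x + s * d x)\<^sup>2 \<partial>M) =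
    (\<integral>x. (a x)\<^sup>2 \<partial>M) + 2 * s * (\<integral>x. a x * d x \<partial>M) + s\<^sup>2 * (\<integral>x. (d x)\<^sup>2 \<partial>M)"
proof -
  have "(\<integral>x. (a x + s * d x)\<^sup>2 \<partial>M) =
     (\<integral>x. (a x)\<^sup>2 + ((2 * s) * (a x * d x) + s\<^sup>2 * (d x)\<^sup>2) \<partial>M)"
    by (rule Bochner_Integration.integral_cong) (auto simp: power2_eq_square algebra_simps)
  also have "\<dots> = (\<integral>x. (a x)\<^sup>2 \<partial>M) + ((\<integral>x. (2 * s) * (a x * d x) \<partial>M) + (\<integral>x. s\<^sup>2 * (d x)\<^sup>2 \<partial>M))"
    using L2_sq_int[OF a] L2_sq_int[OF d] L2_mult[OF a d]
    by (simp add: Bochner_Integration.integral_add)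
  also have "\<dots> = (\<integral>x. (a x)\<^sup>2 \<partial>M) + 2 * s * (\<integral>x. a x * d x \<partial>M) + s\<^sup>2 * (\<integral>x. (d x)\<^sup>2 \<partial>M)"
    by simp
  finally show ?thesis .
qed

lemma inner_eq:
  fixes M :: "(real \<times> real) measure"
  assumes P: "prob_space M" and i: "integrable M (\<lambda>y. fst y - snd y)"
    and e: "(\<integral>y. (fst y - snd y) \<partial>M) = t"
  shows "(\<integral>y. (fst y - snd y - a)\<^sup>2 - (fst y - snd y - b)\<^sup>2 \<partial>M) = (a - t)\<^sup>2 - (b - t)\<^sup>2"
proof -
  have c: "integrable M (\<lambda>y. a\<^sup>2 - b\<^sup>2)"
    using P prob_space.axioms(1) finite_measure.integrable_const by blast
  have "(\<integral>y. (fst y - snd y - a)\<^sup>2 - (fst y - snd y - b)\<^sup>2 \<partial>M)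
      = (\<integral>y. 2 * (b - a) * (fst y - snd y) + (a\<^sup>2 - b\<^sup>2) \<partial>M)"
    by (rule Bochner_Integration.integral_cong) (auto simp: power2_eq_square algebra_simps)
  also have "\<dots> = (\<integral>y. 2 * (b - a) * (fst y - snd y) \<partial>M) + (\<integral>y. (a\<^sup>2 - b\<^sup>2) \<partial>M)"
    using i c by (simp add: Bochner_Integration.integral_add)
  also have "\<dots> = 2 * (b - a) * t + (a\<^sup>2 - b\<^sup>2)"
    using e prob_space.prob_space[OF P] by simp
  also have "\<dots> = (a - t)\<^sup>2 - (b - t)\<^sup>2"
    by (simp add: power2_eq_square algebra_simps)
  finally show ?thesis .
qed

lemma convex_comb_in:
  assumes Fc: "fun_convex F" and tF: "\<And>i. tau i \<in> F"
  shows "finite A \<Longrightarrow> (\<forall>i\<in>A. 0 \<le> w i) \<Longrightarrow> sum w A = 1 \<Longrightarrow> (\<lambda>x. \<Sum>i\<in>A. w i * tau i x) \<in> F"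
proof (induction A arbitrary: w rule: finite_induct)
  case empty then show ?case by simp
next
  case (insert a A)
  have s: "w a + sum w A = 1" using insert by simp
  have nn: "0 \<le> sum w A" using insert by (simp add: sum_nonneg)
  show ?case
  proof (cases "w a = 1")
    case True
    then have "sum w A = 0" using s by simp
    then have "\<forall>i\<in>A. w i = 0" using insert sum_nonneg_eq_0_iff by (metis insert_iff)
    then have "(\<lambda>x. \<Sum>i\<in>insert a A. w i * tau i x) = tau a"
      using insert True by (simp add: fun_eq_iff)
    then show ?thesis using tF by simp
  next
    case False
    then have lt: "w a < 1" using s nn by simp
    define w' where "w' i = w i / (1 - w a)" for i
    have "(\<lambda>x. \<Sum>i\<in>A. w' i * tau i x) \<in> F"
    proof (rule insert.IH)
      show "\<forall>i\<in>A. 0 \<le> w' i" using insert lt by (auto simp: w'_def)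
      have "sum w' A = sum w A / (1 - w a)" by (simp add: w'_def sum_divide_distrib)
      then show "sum w' A = 1" using s lt by simp
    qed
    then have "(\<lambda>x. w a * tau a x + (1 - w a) * (\<Sum>i\<in>A. w' i * tau i x)) \<in> F"
      using Fc tF insert lt unfolding fun_convex_def by auto
    moreover have "(\<lambda>x. w a * tau a x + (1 - w a) * (\<Sum>i\<in>A. w' i * tau i x))
        = (\<lambda>x. \<Sum>i\<in>insert a A. w i * tau i x)"
      using insert lt by (simp add: fun_eq_iff sum_distrib_left w'_def)
    ultimately show ?thesis by simp
  qed
qed

theorem proposition2:
  fixes QX :: "'x measure"
    and tau :: "'s::finite \<Rightarrow> 'x \<Rightarrow> real"
    and H :: "(real^'s) set"
    and F :: "('x \<Rightarrow> real) set"
    and fb :: "'x \<Rightarrow> real"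
    and qstar :: "real^'s"
  assumes QX: "prob_space QX"
    and tau_meas: "\<And>s. tau s \<in> borel_measurable QX"
    and tau_L2: "\<And>s. integrable QX (\<lambda>x. (tau s x)\<^sup>2)"
    and fb_meas: "fb \<in> borel_measurable QX"
    and fb_L2: "integrable QX (\<lambda>x. (fb x)\<^sup>2)"
    and F_L2: "\<And>f. f \<in> F \<Longrightarrow> f \<in> borel_measurable QX \<and> integrable QX (\<lambda>x. (f x)\<^sup>2)"
    and F_convex: "fun_convex F"
    and tau_in_F: "\<And>s. tau s \<in> F"
    and H_sub: "H \<subseteq> prob_simplex"
    and H_convex: "convex H"
    and qstar_in: "qstar \<in> H"
    and qstar_min: "\<And>q. q \<in> H \<Longrightarrow>
        (\<integral>x. (tau_mix tau qstar x - fb x)\<^sup>2 \<partial>QX) \<le> (\<integral>x. (tau_mix tau q x - fb x)\<^sup>2 \<partial>QX)"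
  shows "tau_mix tau qstar \<in> F
    \<and> (\<forall>f\<in>F. robust_rel_risk QX tau H fb (tau_mix tau qstar) \<le> robust_rel_risk QX tau H fb f)
    \<and> (\<forall>f\<in>F. robust_rel_risk QX tau H fb f \<le> robust_rel_risk QX tau H fb (tau_mix tau qstar)
           \<longrightarrow> (AE x in QX. f x = tau_mix tau qstar x))"
proof -
  interpret P: prob_space QX by (rule QX)
  note [measurable] = tau_meas fb_meas
  have Dm[measurable]: "(\<lambda>y::real\<times>real. fst y - snd y) \<in> borel_measurable borel"
    by (intro borel_measurable_continuous_onI continuous_intros)
  define T where "T q = tau_mix tau q" for q
  define ts where "ts = T qstar"
  define N where "N h = (\<integral>x. (h x)\<^sup>2 \<partial>QX)" for h :: "'x \<Rightarrow> real"
  define R where "R f q = (\<integral>x. ((f x - T q x)\<^sup>2 - (fb x - T q x)\<^sup>2) \<partial>QX)" for f q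
  define G where "G f = (\<lambda>x (y::real\<times>real). (fst y - snd y - f x)\<^sup>2 - (fst y - snd y - fb x)\<^sup>2)"
    for f :: "'x \<Rightarrow> real"
  have T_eq: "T q = (\<lambda>x. \<Sum>s\<in>UNIV. q$s * tau s x)" for q by (simp add: T_def tau_mix_def fun_eq_iff)
  have L2tau: "L2 QX (tau s)" for s using tau_L2 by (simp add: L2_def)
  have L2T: "L2 QX (T q)" for q
    unfolding T_eq by (rule L2_sum) (auto simp: L2tau)
  have Tm[measurable]: "T q \<in> borel_measurable QX" for q using L2T by (simp add: L2_def)
  have L2fb: "L2 QX fb" using fb_L2 by (simp add: L2_def)
  have L2F: "L2 QX f" if "f \<in> F" for f using F_L2[OF that] by (simp add: L2_def)
  have L2ts: "L2 QX ts" by (simp add: ts_def L2T)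
  have Rdiff: "R f q = N (\<lambda>x. f x - T q x) - N (\<lambda>x. fb x - T q x)" if "L2 QX f" for f q
    unfolding R_def N_def
    by (rule Bochner_Integration.integral_diff)
       (intro L2_sq_int L2_diff that L2T L2fb)+
  have img: "(\<lambda>K. expect_joint QX K (G f)) ` unc_set QX tau H = R f ` H" if f: "L2 QX f" for f
  proof
    have fm[measurable]: "f \<in> borel_measurable QX" using f by (simp add: L2_def)
    show "(\<lambda>K. expect_joint QX K (G f)) ` unc_set QX tau H \<subseteq> R f ` H"
    proof clarify
      fix K assume K: "K \<in> unc_set QX tau H"
      then have Km[measurable]: "K \<in> measurable QX (subprob_algebra borel)"
        and Kp: "\<forall>x\<in>space QX. prob_space (K x)"
        and Ki: "AE x in QX. integrable (K x) (\<lambda>y. fst y - snd y)"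
        by (auto simp: unc_set_def)
      obtain q where q: "q \<in> H" and Ke: "AE x in QX. (\<integral>y. (fst y - snd y) \<partial>K x) = T q x"
        using K by (auto simp: unc_set_def T_def)
      have ae: "AE x in QX. (\<integral>y. G f x y \<partial>K x) = (f x - T q x)\<^sup>2 - (fb x - T q x)\<^sup>2"
        using AE_space Ki Ke
      proof eventually_elim
        case (elim x)
        then show ?case unfolding G_def by (intro inner_eq) (use Kp in auto)
      qed
      have "expect_joint QX K (G f) = R f q"
        unfolding expect_joint_def R_def
      proof (rule integral_cong_AE[OF _ _ ae])
        show "(\<lambda>x. \<integral>y. G f x y \<partial>K x) \<in> borel_measurable QX"
        proof (rule integral_kernel_measurable[OF _ Km])
          have [measurable]: "(\<lambda>p::'x\<times>(real\<times>real). fst (snd p) - snd (snd p)) \<in> borel_measurable (QX \<Otimes>\<^sub>M borel)"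
            using measurable_compose[OF measurable_snd Dm] by (simp add: o_def)
          show "(\<lambda>(x, y). G f x y) \<in> borel_measurable (QX \<Otimes>\<^sub>M borel)"
            unfolding G_def by measurable
        qed
      qed measurable
      then show "expect_joint QX K (G f) \<in> R f ` H" using q by auto
    qed
    show "R f ` H \<subseteq> (\<lambda>K. expect_joint QX K (G f)) ` unc_set QX tau H"
    proof clarify
      fix q assume q: "q \<in> H"
      define K where "K x = return (borel :: (real\<times>real) measure) (T q x, 0)" for x
      have Km: "K \<in> measurable QX (subprob_algebra borel)"
        unfolding K_def by measurable
      have ij: "integrable (K x) (\<lambda>y. fst y - snd y)" for x
      proof -
        have "(\<integral>\<^sup>+y. ennreal (norm (fst y - snd y)) \<partial>return borel (T q x, 0)) = ennreal (norm (T q x - 0))"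
          by (subst nn_integral_return) auto
        then show ?thesis unfolding K_def by (simp add: integrable_iff_bounded)
      qed
      have Ke: "(\<integral>y. (fst y - snd y) \<partial>K x) = tau_mix tau q x" for x
        unfolding K_def by (simp add: integral_return T_def)
      have "K \<in> unc_set QX tau H"
        unfolding unc_set_def using Km ij Ke q
        by (auto simp: K_def prob_space_return)
      moreover have "expect_joint QX K (G f) = R f q"
        unfolding expect_joint_def R_def
      proof (rule Bochner_Integration.integral_cong[OF refl])
        fix x assume "x \<in> space QX"
        have "(\<integral>y. G f x y \<partial>K x) = G f x (T q x, 0)"
          unfolding K_def by (rule integral_return) (auto simp: G_def)
        then show "(\<integral>y. G f x y \<partial>K x) = (f x - T q x)\<^sup>2 - (fb x - T q x)\<^sup>2"
          by (simp add: G_def power2_eq_square algebra_simps)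
      qed
      ultimately show "R f q \<in> (\<lambda>K. expect_joint QX K (G f)) ` unc_set QX tau H"
        by (metis image_eqI)
    qed
  qed

  have bdd: "bdd_above (R f ` H)" if f: "L2 QX f" for f
  proof -
    define Tb where "Tb x = (\<Sum>s\<in>UNIV. 1 * \<bar>tau s x\<bar>)" for x
    have L2Tb: "L2 QX Tb" unfolding Tb_def by (rule L2_sum) (auto intro: L2_abs L2tau)
    have absT: "\<bar>T q x\<bar> \<le> Tb x" if q: "q \<in> H" for q x
    proof -
      have qs: "0 \<le> q$s \<and> q$s \<le> 1" for s
      proof -
        have qp: "q \<in> prob_simplex" using q H_sub by auto
        then have "\<forall>s. 0 \<le> q$s" and "sum (\<lambda>s. q$s) UNIV = 1" by (auto simp: prob_simplex_def)
        moreover have "q$s \<le> sum (\<lambda>s. q$s) UNIV"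
          by (rule member_le_sum) (use calculation in auto)
        ultimately show ?thesis by simp
      qed
      have "\<bar>T q x\<bar> \<le> (\<Sum>s\<in>UNIV. \<bar>q$s * tau s x\<bar>)" unfolding T_eq by (rule sum_abs)
      also have "\<dots> \<le> Tb x" unfolding Tb_def
      proof (rule sum_mono)
        fix s
        have "\<bar>q$s\<bar> * \<bar>tau s x\<bar> \<le> 1 * \<bar>tau s x\<bar>"
          by (rule mult_right_mono) (use qs in auto)
        then show "\<bar>q$s * tau s x\<bar> \<le> 1 * \<bar>tau s x\<bar>" by (simp add: abs_mult)
      qed
      finally show ?thesis .
    qed
    have "R f q \<le> (\<integral>x. 2 * (f x)\<^sup>2 + 2 * (Tb x)\<^sup>2 \<partial>QX)" if q: "q \<in> H" for q
      unfolding R_def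
    proof (rule integral_mono)
      show "integrable QX (\<lambda>x. (f x - T q x)\<^sup>2 - (fb x - T q x)\<^sup>2)"
        by (intro Bochner_Integration.integrable_diff L2_sq_int L2_diff f L2T L2fb)
      show "integrable QX (\<lambda>x. 2 * (f x)\<^sup>2 + 2 * (Tb x)\<^sup>2)"
        using L2_sq_int[OF f] L2_sq_int[OF L2Tb] by simp
      fix x
      have a: "(T q x)\<^sup>2 \<le> (Tb x)\<^sup>2" using absT[OF q, of x] abs_le_square_iff
        by (metis abs_le_D1 abs_of_nonneg order_trans abs_ge_zero)
      have "0 \<le> (f x + T q x)\<^sup>2" by simp
      then have "(f x - T q x)\<^sup>2 \<le> 2 * (f x)\<^sup>2 + 2 * (T q x)\<^sup>2"
        by (simp add: power2_eq_square algebra_simps)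
      moreover have "0 \<le> (fb x - T q x)\<^sup>2" by simp
      ultimately show "(f x - T q x)\<^sup>2 - (fb x - T q x)\<^sup>2 \<le> 2 * (f x)\<^sup>2 + 2 * (Tb x)\<^sup>2"
        using a by linarith
    qed
    then show ?thesis by (auto simp: bdd_above_def)
  qed
  have rob: "robust_rel_risk QX tau H fb f = Sup (R f ` H)" if f: "L2 QX f" for f
  proof -
    have "robust_rel_risk QX tau H fb f = (SUP K\<in>unc_set QX tau H. expect_joint QX K (G f))"
      by (simp add: robust_rel_risk_def G_def)
    also have "\<dots> = Sup (R f ` H)" using img[OF f] by simp
    finally show ?thesis .
  qed
  have var: "0 \<le> (\<integral>x. (ts x - fb x) * (T q x - ts x) \<partial>QX)" if q: "q \<in> H" for q
  proof -
    define A where "A = (\<integral>x. (ts x - fb x) * (T q x - ts x) \<partial>QX)"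
    define B where "B = (\<integral>x. (T q x - ts x)\<^sup>2 \<partial>QX)"
    have L2a: "L2 QX (\<lambda>x. ts x - fb x)" by (intro L2_diff L2ts L2fb)
    have L2d: "L2 QX (\<lambda>x. T q x - ts x)" by (intro L2_diff L2ts L2T)
    have B0: "0 \<le> B" unfolding B_def by (rule integral_nonneg_AE) auto
    have ineq: "0 \<le> 2 * A + s * B" if s: "0 < s" "s \<le> 1" for s
    proof -
      define qs where "qs = (1 - s) *\<^sub>R qstar + s *\<^sub>R q"
      have qsH: "qs \<in> H" unfolding qs_def
        by (rule convexD[OF H_convex qstar_in q]) (use s in auto)
      have Tqs: "tau_mix tau qs x - fb x = (ts x - fb x) + s * (T q x - ts x)" for x
        unfolding ts_def T_def tau_mix_def qs_def
        by (simp add: algebra_simps sum.distrib sum_distrib_left sum_subtractf)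
      have "(\<integral>x. (ts x - fb x)\<^sup>2 \<partial>QX) \<le> (\<integral>x. (tau_mix tau qs x - fb x)\<^sup>2 \<partial>QX)"
        using qstar_min[OF qsH] by (simp add: ts_def T_def)
      also have "\<dots> = (\<integral>x. (ts x - fb x)\<^sup>2 \<partial>QX) + 2 * s * A + s\<^sup>2 * B"
        unfolding Tqs A_def B_def by (rule L2_expand[OF L2a L2d])
      finally have "0 \<le> s * (2 * A + s * B)" by (simp add: power2_eq_square algebra_simps)
      then show ?thesis using s by (simp add: zero_le_mult_iff)
    qed
    show ?thesis
    proof (rule ccontr)
      assume "\<not> ?thesis"
      then have An: "A < 0" by (simp add: A_def)
      define s where "s = min 1 (- A / (B + 1))"
      have s0: "0 < s" using An B0 divide_neg_pos[of A "B+1"] by (simp add: s_def)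
      have s1: "s \<le> 1" by (simp add: s_def)
      have "s * B \<le> (- A / (B + 1)) * B"
        by (rule mult_right_mono) (use B0 in \<open>auto simp: s_def\<close>)
      also have "\<dots> < - A"
      proof -
        have "(- A / (B + 1)) * B = - A * (B / (B + 1))" by simp
        moreover have "B / (B + 1) < 1" using B0 by simp
        ultimately show ?thesis using An
          by (metis mult_less_cancel_left_pos mult.right_neutral neg_0_less_iff_less)
      qed
      finally have "2 * A + s * B < 0" using An by linarith
      then show False using ineq[OF s0 s1] by linarith
    qed
  qed
  have upper: "R ts q \<le> - N (\<lambda>x. fb x - ts x)" if q: "q \<in> H" for q
  proof -
    have L2a: "L2 QX (\<lambda>x. fb x - ts x)" by (intro L2_diff L2ts L2fb)
    have L2d: "L2 QX (\<lambda>x. ts x - T q x)" by (intro L2_diff L2ts L2T)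
    have "N (\<lambda>x. fb x - T q x) = (\<integral>x. ((fb x - ts x) + 1 * (ts x - T q x))\<^sup>2 \<partial>QX)"
      by (simp add: N_def)
    also have "\<dots> = N (\<lambda>x. fb x - ts x) + 2 * 1 * (\<integral>x. (fb x - ts x) * (ts x - T q x) \<partial>QX)
        + 1\<^sup>2 * N (\<lambda>x. ts x - T q x)"
      unfolding N_def by (rule L2_expand[OF L2a L2d])
    also have "(\<integral>x. (fb x - ts x) * (ts x - T q x) \<partial>QX) = (\<integral>x. (ts x - fb x) * (T q x - ts x) \<partial>QX)"
      by (rule Bochner_Integration.integral_cong) (auto simp: algebra_simps)
    finally have "N (\<lambda>x. fb x - T q x) \<ge> N (\<lambda>x. fb x - ts x) + N (\<lambda>x. ts x - T q x)"
      using var[OF q] by simp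
    then show ?thesis using Rdiff[OF L2ts] by simp
  qed
  have ts_eq: "ts = tau_mix tau qstar" by (simp add: ts_def T_def)
  have tsF: "ts \<in> F"
  proof -
    have qp: "qstar \<in> prob_simplex" using qstar_in H_sub by auto
    have "(\<lambda>x. \<Sum>s\<in>UNIV. qstar$s * tau s x) \<in> F"
      by (rule convex_comb_in[OF F_convex tau_in_F]) (use qp in \<open>auto simp: prob_simplex_def\<close>)
    then show ?thesis by (simp add: ts_def T_eq)
  qed
  have Hne: "H \<noteq> {}" using qstar_in by auto
  have rob_ts: "robust_rel_risk QX tau H fb ts \<le> - N (\<lambda>x. fb x - ts x)"
    unfolding rob[OF L2ts] by (rule cSUP_least[OF Hne upper])
  have key: "robust_rel_risk QX tau H fb ts + N (\<lambda>x. f x - ts x) \<le> robust_rel_risk QX tau H fb f"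
    if f: "f \<in> F" for f
  proof -
    have "R f qstar \<le> Sup (R f ` H)" by (rule cSUP_upper[OF qstar_in bdd[OF L2F[OF f]]])
    moreover have "R f qstar = N (\<lambda>x. f x - ts x) - N (\<lambda>x. fb x - ts x)"
      using Rdiff[OF L2F[OF f]] by (simp add: ts_def)
    ultimately show ?thesis using rob[OF L2F[OF f]] rob_ts by linarith
  qed
  have ae: "AE x in QX. f x = ts x"
    if f: "f \<in> F" and le: "robust_rel_risk QX tau H fb f \<le> robust_rel_risk QX tau H fb ts" for f
  proof -
    have L2d: "L2 QX (\<lambda>x. f x - ts x)" by (intro L2_diff L2F f L2ts)
    have "N (\<lambda>x. f x - ts x) \<le> 0" using key[OF f] le by linarith
    moreover have "0 \<le> N (\<lambda>x. f x - ts x)" unfolding N_def by (rule integral_nonneg_AE) auto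
    ultimately have "N (\<lambda>x. f x - ts x) = 0" by linarith
    then have "(\<integral>x. (f x - ts x)\<^sup>2 \<partial>QX) = 0" by (simp add: N_def)
    then have "AE x in QX. (f x - ts x)\<^sup>2 = 0"
      using integral_nonneg_eq_0_iff_AE[OF L2_sq_int[OF L2d]] by simp
    then show ?thesis by eventually_elim simp
  qed
  have key2: "robust_rel_risk QX tau H fb ts \<le> robust_rel_risk QX tau H fb f" if f: "f \<in> F" for f
  proof -
    have "0 \<le> N (\<lambda>x. f x - ts x)" unfolding N_def by (rule integral_nonneg_AE) auto
    then show ?thesis using key[OF f] by linarith
  qed
  show ?thesis
    unfolding ts_eq[symmetric]
    using tsF key2 ae by blast
qed

end
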